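(* Let $P$ be a finite lattice, let $\mu:2^P\to\mathbb{R}_{\ge0}$ be additive, and let $r(f)=\mu(P\setminus\Phi f)$ for $f\in\mathcal{L}_P$. Define $\mathrm{fragility}(f)=\max\{r(w): w\in\mathcal{L}_P,\ w\le f,\ w\text{ prime}\}$. Then for all $f,g\in\mathcal{L}_P$, $\mathrm{fragility}(f+g)\le\mathrm{fragility}(f)+\mathrm{fragility}(g)$.
   Context: $P$ is a finite lattice. $\mathcal{L}_P$ is the set of maps $f:P\to P$ satisfying (A.1) $a\le f(a)$; (A.2) $a\le b\Rightarrow f(a)\le f(b)$; (A.3) $f(f(a))=f(a)$, ordered pointwise; it is a lattice with join $+$. $\Phi f=\{a:f(a)=a\}$. $f$ is prime if $P\setminus\Phi f$ is closed under $\wedge$. *)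

theory Defs
  imports Complex_Main
begin

text \<open>P is modelled as a finite type 'a with a lattice structure.
  Closure operators (A.1)-(A.3), ordered pointwise (the standard order on functions).\<close>

definition closure_ops :: "('a::order \<Rightarrow> 'a) set" where
  "closure_ops = {f. (\<forall>a. a \<le> f a) \<and> (\<forall>a b. a \<le> b \<longrightarrow> f a \<le> f b) \<and> (\<forall>a. f (f a) = f a)}"

definition fixset :: "('a \<Rightarrow> 'a) \<Rightarrow> 'a set" where
  "fixset f = {a. f a = a}"

text \<open>The join (+) in the lattice of closure operators: least upper bound within closure_ops.\<close>
definition cjoin :: "('a::order \<Rightarrow> 'a) \<Rightarrow> ('a \<Rightarrow> 'a) \<Rightarrow> ('a \<Rightarrow> 'a)" where
  "cjoin f g = (THE h. h \<in> closure_ops \<and> f \<le> h \<and> g \<le> h \<and>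
       (\<forall>k\<in>closure_ops. f \<le> k \<and> g \<le> k \<longrightarrow> h \<le> k))"

definition prime_cl :: "('a::lattice \<Rightarrow> 'a) \<Rightarrow> bool" where
  "prime_cl f = (\<forall>a b. a \<notin> fixset f \<and> b \<notin> fixset f \<longrightarrow> inf a b \<notin> fixset f)"

definition additive_measure :: "('a set \<Rightarrow> real) \<Rightarrow> bool" where
  "additive_measure \<mu> = ((\<forall>A. 0 \<le> \<mu> A) \<and> (\<forall>A B. A \<inter> B = {} \<longrightarrow> \<mu> (A \<union> B) = \<mu> A + \<mu> B))"

definition rk :: "('a set \<Rightarrow> real) \<Rightarrow> ('a \<Rightarrow> 'a) \<Rightarrow> real" where
  "rk \<mu> f = \<mu> (UNIV - fixset f)"

definition fragility :: "('a set \<Rightarrow> real) \<Rightarrow> ('a::lattice \<Rightarrow> 'a) \<Rightarrow> real" where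
  "fragility \<mu> f = Max {rk \<mu> w | w. w \<in> closure_ops \<and> w \<le> f \<and> prime_cl w}"

end

theory Submission
  imports Defs
begin

definition topel :: "'a::{finite,lattice}" where "topel = Sup_fin UNIV"

lemma le_topel: "(x::'a::{finite,lattice}) \<le> topel"
  unfolding topel_def by (rule Sup_fin.coboundedI) auto

definition pset :: "'a::{finite,lattice} set \<Rightarrow> bool" where
  "pset N = ((\<forall>a b. a \<in> N \<longrightarrow> b \<in> N \<longrightarrow> inf a b \<in> N) \<and>
             (\<forall>a b. a \<notin> N \<longrightarrow> b \<notin> N \<longrightarrow> inf a b \<notin> N) \<and> topel \<notin> N)"

definition cl :: "'a::{finite,lattice} set \<Rightarrow> 'a \<Rightarrow> 'a" where
  "cl N x = (LEAST y. y \<notin> N \<and> x \<le> y)"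

lemma exists_min_aux:
  fixes S T :: "'a::lattice set"
  assumes "finite S" "S \<noteq> {}" "S \<subseteq> T" "\<forall>a\<in>T. \<forall>b\<in>T. inf a b \<in> T"
  shows "\<exists>m\<in>T. \<forall>y\<in>S. m \<le> y"
  using assms(1-3)
proof (induction S rule: finite_ne_induct)
  case (singleton x)
  then show ?case by auto
next
  case (insert a F)
  then obtain m where m: "m \<in> T" "\<forall>y\<in>F. m \<le> y" by auto
  have "inf a m \<in> T" using assms(4) m insert by auto
  moreover have "\<forall>y\<in>insert a F. inf a m \<le> y" using m
    by (auto intro: le_infI2)
  ultimately show ?case by blast
qed

lemma exists_min:
  fixes S :: "'a::{finite,lattice} set"
  assumes "S \<noteq> {}" "\<forall>a\<in>S. \<forall>b\<in>S. inf a b \<in> S"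
  shows "\<exists>m\<in>S. \<forall>y\<in>S. m \<le> y"
  using exists_min_aux[of S S] assms finite by blast

lemma cl_char:
  fixes N :: "'a::{finite,lattice} set"
  assumes "\<forall>a b. a \<notin> N \<longrightarrow> b \<notin> N \<longrightarrow> inf a b \<notin> N" "topel \<notin> N"
  shows "cl N x \<notin> N \<and> x \<le> cl N x \<and> (\<forall>y. y \<notin> N \<and> x \<le> y \<longrightarrow> cl N x \<le> y)"
proof -
  let ?S = "{y. y \<notin> N \<and> x \<le> y}"
  have "topel \<in> ?S" using assms le_topel by auto
  hence "?S \<noteq> {}" by blast
  moreover have "\<forall>a\<in>?S. \<forall>b\<in>?S. inf a b \<in> ?S" using assms(1) by simp
  ultimately obtain m where m: "m \<in> ?S" "\<forall>y\<in>?S. m \<le> y" using exists_min[of ?S] by blast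
  have "cl N x = m" unfolding cl_def
  proof (rule Least_equality)
    show "m \<notin> N \<and> x \<le> m" using m(1) by simp
    fix y assume "y \<notin> N \<and> x \<le> y" thus "m \<le> y" using m(2) by simp
  qed
  thus ?thesis using m by auto
qed

lemma cl_props:
  fixes N :: "'a::{finite,lattice} set"
  assumes "\<forall>a b. a \<notin> N \<longrightarrow> b \<notin> N \<longrightarrow> inf a b \<notin> N" "topel \<notin> N"
  shows "cl N \<in> closure_ops" "fixset (cl N) = - N"
proof -
  note c = cl_char[OF assms]
  have fx: "cl N x = x" if "x \<notin> N" for x
    using c[of x] that order.antisym[of "cl N x" x] by blast
  show "cl N \<in> closure_ops" unfolding closure_ops_def
  proof (intro CollectI conjI allI impI)
    fix a show "a \<le> cl N a" using c by blast
  next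
    fix a b :: 'a assume "a \<le> b"
    thus "cl N a \<le> cl N b" using c[of a] c[of b] by (meson order_trans)
  next
    fix a show "cl N (cl N a) = cl N a" using c[of a] fx by blast
  qed
  show "fixset (cl N) = - N" unfolding fixset_def
    using fx c by (auto, metis)
qed

lemma fix_le:
  assumes "f \<in> closure_ops" "w \<in> closure_ops" "fixset f \<subseteq> fixset w"
  shows "w \<le> (f::'a::order \<Rightarrow> 'a)"
proof (rule le_funI)
  fix x
  have "f x \<in> fixset w" using assms unfolding closure_ops_def fixset_def by auto
  hence "w (f x) = f x" unfolding fixset_def by simp
  moreover have "w x \<le> w (f x)" using assms unfolding closure_ops_def by auto
  ultimately show "w x \<le> f x" by simp
qed

lemma le_fix:
  assumes "f \<in> closure_ops" "w \<in> closure_ops" "w \<le> (f::'a::order \<Rightarrow> 'a)"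
  shows "fixset f \<subseteq> fixset w"
proof
  fix x assume "x \<in> fixset f"
  hence "f x = x" by (simp add: fixset_def)
  moreover have "w x \<le> f x" using assms(3) by (simp add: le_fun_def)
  moreover have "x \<le> w x" using assms(2) by (simp add: closure_ops_def)
  ultimately have "w x = x" by (metis order.antisym)
  thus "x \<in> fixset w" by (simp add: fixset_def)
qed

lemma fix_meet:
  assumes "f \<in> closure_ops" "a \<in> fixset f" "b \<in> fixset f"
  shows "inf a b \<in> fixset (f::'a::lattice \<Rightarrow> 'a)"
proof -
  have "f (inf a b) \<le> f a" "f (inf a b) \<le> f b" using assms(1) unfolding closure_ops_def by auto
  hence "f (inf a b) \<le> inf a b" using assms(2,3) by (simp add: fixset_def)
  moreover have "inf a b \<le> f (inf a b)" using assms(1) by (simp add: closure_ops_def)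
  ultimately have "f (inf a b) = inf a b" by (rule order.antisym)
  thus ?thesis by (simp add: fixset_def)
qed

lemma fix_top:
  assumes "f \<in> closure_ops"
  shows "topel \<in> fixset (f::'a::{finite,lattice} \<Rightarrow> 'a)"
  using assms le_topel[of "f topel"] order.antisym[of "f topel" topel] unfolding closure_ops_def fixset_def
  by auto

lemma pset_of_prime:
  assumes "w \<in> closure_ops" "prime_cl w"
  shows "pset (- fixset (w::'a::{finite,lattice} \<Rightarrow> 'a))"
  using assms fix_meet[OF assms(1)] fix_top[OF assms(1)] unfolding pset_def prime_cl_def
  by auto

lemma pset_up:
  assumes "pset N"
  shows "pset (N \<inter> {x. c \<le> x})"
  using assms le_topel[of c] unfolding pset_def by auto

lemma step:
  assumes f: "f \<in> closure_ops" and m: "\<forall>y\<in>N. m \<le> y" "m \<in> N"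
    and p1: "pset N1'" and d1: "N1' \<inter> fixset f = {}"
    and cov: "N \<inter> {x. f m \<le> x} \<subseteq> N1' \<union> N2'"
  shows "pset ({x. m \<le> x \<and> \<not> f m \<le> x} \<union> (N1' \<inter> {x. f m \<le> x}))
    \<and> ({x. m \<le> x \<and> \<not> f m \<le> x} \<union> (N1' \<inter> {x. f m \<le> x})) \<inter> fixset f = {}
    \<and> N \<subseteq> ({x. m \<le> x \<and> \<not> f m \<le> x} \<union> (N1' \<inter> {x. f m \<le> x})) \<union> N2'"
proof (intro conjI)
  have me: "m \<le> f m" using f by (simp add: closure_ops_def)
  let ?N1 = "{x. m \<le> x \<and> \<not> f m \<le> x} \<union> (N1' \<inter> {x. f m \<le> x})"
  have notin: "x \<notin> ?N1 \<longleftrightarrow> (\<not> m \<le> x \<or> (f m \<le> x \<and> x \<notin> N1'))" for x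
    using me order.trans[of m "f m" x] by auto
  show "pset ?N1" unfolding pset_def
  proof (intro conjI allI impI)
    fix a b assume a: "a \<in> ?N1" and b: "b \<in> ?N1"
    show "inf a b \<in> ?N1"
    proof (cases "f m \<le> a \<and> f m \<le> b")
      case True
      hence "a \<in> N1'" "b \<in> N1'" using a b by auto
      hence "inf a b \<in> N1'" using p1 by (simp add: pset_def)
      thus ?thesis using True by auto
    next
      case False
      have "m \<le> a" "m \<le> b" using a b order.trans[OF me] by auto
      hence "m \<le> inf a b" by simp
      moreover have "\<not> f m \<le> inf a b" using False le_inf_iff by blast
      ultimately show ?thesis by auto
    qed
  next
    fix a b assume a: "a \<notin> ?N1" and b: "b \<notin> ?N1"
    show "inf a b \<notin> ?N1"
    proof (cases "\<not> m \<le> a \<or> \<not> m \<le> b")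
      case True
      hence "\<not> m \<le> inf a b" using le_inf_iff by blast
      thus ?thesis using notin by blast
    next
      case False
      hence "f m \<le> a" "a \<notin> N1'" "f m \<le> b" "b \<notin> N1'" using a b notin by auto
      hence "f m \<le> inf a b" "inf a b \<notin> N1'" using p1 by (auto simp: pset_def)
      thus ?thesis using notin by blast
    qed
  next
    show "topel \<notin> ?N1" using p1 le_topel[of "f m"] unfolding pset_def by auto
  qed
  show "?N1 \<inter> fixset f = {}"
  proof -
    have "x \<notin> fixset f" if "m \<le> x" "\<not> f m \<le> x" for x
    proof
      assume "x \<in> fixset f"
      hence "f x = x" by (simp add: fixset_def)
      moreover have "f m \<le> f x" using f that(1) by (simp add: closure_ops_def)
      ultimately show False using that(2) by simp
    qed
    thus ?thesis using d1 by auto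
  qed
  show "N \<subseteq> ?N1 \<union> N2'" using m cov by auto
qed

lemma cover:
  fixes N :: "'a::{finite,lattice} set"
  assumes "f \<in> closure_ops" "g \<in> closure_ops" "pset N" "N \<inter> fixset f \<inter> fixset g = {}"
  shows "\<exists>N1 N2. pset N1 \<and> pset N2 \<and> N1 \<inter> fixset f = {} \<and> N2 \<inter> fixset g = {} \<and> N \<subseteq> N1 \<union> N2"
  using assms(3,4)
proof (induction "card N" arbitrary: N rule: less_induct)
  case less
  show ?case
  proof (cases "N = {}")
    case True
    have "pset ({}::'a set)" unfolding pset_def by auto
    thus ?thesis using True by blast
  next
    case False
    then obtain m where m: "m \<in> N" "\<forall>y\<in>N. m \<le> y"
      using exists_min[of N] less.prems by (auto simp: pset_def)
    have sub: "card (N \<inter> {x. h m \<le> x}) < card N" if "h \<in> closure_ops" "m \<notin> fixset h" for h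
    proof -
      have "m \<le> h m" using that(1) by (simp add: closure_ops_def)
      hence "\<not> h m \<le> m" using that(2) order.antisym[of m "h m"] by (auto simp: fixset_def)
      hence "m \<notin> N \<inter> {x. h m \<le> x}" by auto
      hence "N \<inter> {x. h m \<le> x} \<subset> N" using m by blast
      thus ?thesis by (simp add: psubset_card_mono)
    qed
    have ps: "pset (N \<inter> {x. h m \<le> x})" for h using pset_up less.prems by blast
    have ds: "(N \<inter> {x. h m \<le> x}) \<inter> fixset f \<inter> fixset g = {}" for h using less.prems by blast
    show ?thesis
    proof (cases "m \<notin> fixset f")
      case True
      obtain N1' N2' where IH: "pset N1'" "pset N2'" "N1' \<inter> fixset f = {}" "N2' \<inter> fixset g = {}"
        "N \<inter> {x. f m \<le> x} \<subseteq> N1' \<union> N2'"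
        using less.hyps[OF sub[OF assms(1) True] ps[of f] ds[of f]] by blast
      from step[OF assms(1) m(2,1) IH(1,3,5)] IH(2,4) show ?thesis by blast
    next
      case False
      hence mg: "m \<notin> fixset g" using m less.prems by blast
      obtain N1' N2' where IH: "pset N1'" "pset N2'" "N1' \<inter> fixset f = {}" "N2' \<inter> fixset g = {}"
        "N \<inter> {x. g m \<le> x} \<subseteq> N1' \<union> N2'"
        using less.hyps[OF sub[OF assms(2) mg] ps[of g] ds[of g]] by blast
      have "N \<inter> {x. g m \<le> x} \<subseteq> N2' \<union> N1'" using IH(5) by blast
      from step[OF assms(2) m(2,1) IH(2,4) this] IH(1,3) show ?thesis by blast
    qed
  qed
qed

lemma cjoin_fix:
  fixes f g :: "'a::{finite,lattice} \<Rightarrow> 'a"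
  assumes f: "f \<in> closure_ops" and g: "g \<in> closure_ops"
  shows "cjoin f g \<in> closure_ops \<and> fixset (cjoin f g) = fixset f \<inter> fixset g"
proof -
  let ?M = "- (fixset f \<inter> fixset g)"
  have h1: "\<forall>a b. a \<notin> ?M \<longrightarrow> b \<notin> ?M \<longrightarrow> inf a b \<notin> ?M"
    using fix_meet[OF f] fix_meet[OF g] by auto
  have h2: "topel \<notin> ?M" using fix_top[OF f] fix_top[OF g] by auto
  define k where "k = cl ?M"
  have kc: "k \<in> closure_ops" and kf: "fixset k = fixset f \<inter> fixset g"
    using cl_props[OF h1 h2] unfolding k_def by auto
  let ?P = "\<lambda>h. h \<in> closure_ops \<and> f \<le> h \<and> g \<le> h \<and>
       (\<forall>k\<in>closure_ops. f \<le> k \<and> g \<le> k \<longrightarrow> h \<le> k)"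
  have Pk: "?P k"
  proof (intro conjI ballI impI)
    show "k \<in> closure_ops" by (rule kc)
    show "f \<le> k" by (rule fix_le[OF kc f]) (use kf in auto)
    show "g \<le> k" by (rule fix_le[OF kc g]) (use kf in auto)
    fix k' assume k': "k' \<in> closure_ops" "f \<le> k' \<and> g \<le> k'"
    have "fixset k' \<subseteq> fixset f" "fixset k' \<subseteq> fixset g"
      using le_fix[OF k'(1) f] le_fix[OF k'(1) g] k'(2) by auto
    thus "k \<le> k'" using fix_le[OF k'(1) kc] kf by auto
  qed
  have "cjoin f g = k" unfolding cjoin_def
  proof (rule the_equality)
    show "?P k" by (rule Pk)
    fix h assume "?P h"
    hence "h \<le> k" "k \<le> h" using Pk by auto
    thus "h = k" by (rule order.antisym)
  qed
  thus ?thesis using kc kf by simp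
qed

lemma mu_mono:
  assumes "additive_measure \<mu>" "A \<subseteq> B"
  shows "\<mu> A \<le> \<mu> B"
proof -
  have "\<mu> B = \<mu> (A \<union> (B - A))" using assms(2) by (simp add: Un_absorb1)
  also have "\<dots> = \<mu> A + \<mu> (B - A)" using assms(1) unfolding additive_measure_def by blast
  finally show ?thesis using assms(1) unfolding additive_measure_def by auto
qed

lemma mu_sub:
  assumes "additive_measure \<mu>"
  shows "\<mu> (A \<union> B) \<le> \<mu> A + \<mu> B"
proof -
  have "\<mu> (A \<union> B) = \<mu> (A \<union> (B - A))" by simp
  also have "\<dots> = \<mu> A + \<mu> (B - A)" using assms unfolding additive_measure_def by blast
  also have "\<dots> \<le> \<mu> A + \<mu> B" using mu_mono[OF assms, of "B - A" B] by auto
  finally show ?thesis .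
qed

lemma frag_ge:
  fixes f :: "'a::{finite,lattice} \<Rightarrow> 'a"
  assumes "w \<in> closure_ops" "w \<le> f" "prime_cl w"
  shows "rk \<mu> w \<le> fragility \<mu> f"
proof -
  have fin: "finite {rk \<mu> w | w. w \<in> closure_ops \<and> w \<le> f \<and> prime_cl w}"
    by (rule finite_subset[of _ "range (rk \<mu>)"]) auto
  show ?thesis unfolding fragility_def by (rule Max_ge[OF fin]) (use assms in blast)
qed

theorem mainTheorem19:
  fixes \<mu> :: "('a::{finite,lattice}) set \<Rightarrow> real"
    and f g :: "'a \<Rightarrow> 'a"
  assumes "additive_measure \<mu>"
    and "f \<in> closure_ops" and "g \<in> closure_ops"
  shows "fragility \<mu> (cjoin f g) \<le> fragility \<mu> f + fragility \<mu> g"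
proof -
  have hj: "cjoin f g \<in> closure_ops" "fixset (cjoin f g) = fixset f \<inter> fixset g"
    using cjoin_fix[OF assms(2,3)] by auto
  let ?S = "{rk \<mu> w | w. w \<in> closure_ops \<and> w \<le> cjoin f g \<and> prime_cl w}"
  have fin: "finite ?S"
    by (rule finite_subset[of _ "range (rk \<mu>)"]) auto
  have idc: "cl ({}::'a set) \<in> closure_ops" "fixset (cl ({}::'a set)) = UNIV"
    using cl_props[of "{}::'a set"] by auto
  have "cl ({}::'a set) \<le> cjoin f g" by (rule fix_le[OF hj(1) idc(1)]) (use idc in auto)
  moreover have "prime_cl (cl ({}::'a set))" using idc unfolding prime_cl_def by auto
  ultimately have ne: "?S \<noteq> {}" using idc by blast
  have "\<forall>x\<in>?S. x \<le> fragility \<mu> f + fragility \<mu> g"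
  proof
    fix x assume "x \<in> ?S"
    then obtain w where w: "x = rk \<mu> w" "w \<in> closure_ops" "w \<le> cjoin f g" "prime_cl w" by blast
    have "fixset f \<inter> fixset g \<subseteq> fixset w" using le_fix[OF hj(1) w(2,3)] hj by simp
    hence d: "(- fixset w) \<inter> fixset f \<inter> fixset g = {}" by blast
    obtain N1 N2 where N: "pset N1" "pset N2" "N1 \<inter> fixset f = {}" "N2 \<inter> fixset g = {}"
      "- fixset w \<subseteq> N1 \<union> N2"
      using cover[OF assms(2,3) pset_of_prime[OF w(2,4)] d] by blast
    have c1: "cl N1 \<in> closure_ops" "fixset (cl N1) = - N1"
      using cl_props[of N1] N(1) unfolding pset_def by auto
    have c2: "cl N2 \<in> closure_ops" "fixset (cl N2) = - N2"
      using cl_props[of N2] N(2) unfolding pset_def by auto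
    have "cl N1 \<le> f" by (rule fix_le[OF assms(2) c1(1)]) (use c1 N in auto)
    moreover have "prime_cl (cl N1)" using c1 N(1) unfolding prime_cl_def pset_def by auto
    ultimately have r1: "\<mu> N1 \<le> fragility \<mu> f"
      using frag_ge[OF c1(1)] c1(2) unfolding rk_def by (metis Diff_Compl inf_top_left)
    have "cl N2 \<le> g" by (rule fix_le[OF assms(3) c2(1)]) (use c2 N in auto)
    moreover have "prime_cl (cl N2)" using c2 N(2) unfolding prime_cl_def pset_def by auto
    ultimately have r2: "\<mu> N2 \<le> fragility \<mu> g"
      using frag_ge[OF c2(1)] c2(2) unfolding rk_def by (metis Diff_Compl inf_top_left)
    have "x = \<mu> (- fixset w)" using w(1) unfolding rk_def by (simp add: Compl_eq_Diff_UNIV)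
    also have "\<dots> \<le> \<mu> (N1 \<union> N2)" by (rule mu_mono[OF assms(1) N(5)])
    also have "\<dots> \<le> \<mu> N1 + \<mu> N2" by (rule mu_sub[OF assms(1)])
    finally show "x \<le> fragility \<mu> f + fragility \<mu> g" using r1 r2 by linarith
  qed
  thus ?thesis unfolding fragility_def[of \<mu> "cjoin f g"] using Max_le_iff[OF fin ne] by blast
qed

end
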